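(* Let $n\ge2$ and let $\mathfrak{g}_n$ be the Lie algebra defined in the context. Then $\mathfrak{g}_n$ admits $\nu_n=T_{n-2}+1=\frac{(n-1)(n-2)}{2}+1$ functionally independent Casimir invariants, of which $T_{n-2}$ are the central elements $z_{i,j}$; hence there is only one nontrivial Casimir invariant, up to multiplication by scalars and by central elements. Equivalently, the matrix $A=\big(\sum_k c_{ij}^k x_k\big)_{i,j}$ formed from the structure constants of $\mathfrak{g}_n$ in commuting variables has rank $2(n-1)$.
   Context: $\mathbb{K}$ is $\mathbb{R}$ or $\mathbb{C}$; $T_m=m(m+1)/2$. For $n\ge2$, $\mathfrak{g}_n$ is the Lie algebra of dimension $T_n$ with basis $h,x_-,x_+$, $y_{i,\pm}$ ($1\le i\le n-2$), $z_{i,j}$ ($1\le i\le j\le n-2$), whose nonzero brackets (up to antisymmetry) are $[x_+,x_-]=h$, $[h,x_\pm]=\pm2x_\pm$, $[h,y_{i,\pm}]=\pm y_{i,\pm}$, $[x_-,y_{i,+}]=y_{i,-}$, $[x_+,y_{i,-}]=y_{i,+}$, $[y_{i,+},y_{j,-}]=z_{\min(i,j),\max(i,j)}$; all other brackets of basis elements vanish, so the centre is spanned by the $z_{i,j}$. With structure constants $[x_i,x_j]=\sum_k c_{ij}^kx_k$ in a basis $x_1,\dots,x_d$, the number of functionally independent Casimir invariants (functions on $\mathfrak{g}_n^*$ Poisson-commuting, for the Lie–Poisson bracket, with all linear functions) equals $\dim\mathfrak{g}_n-\operatorname{rank}A$ with $A=\big(\sum_kc_{ij}^kx_k\big)_{i,j=1}^d$,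 the $x_k$ being commuting variables. *)

theory Defs
  imports "Jordan_Normal_Form.DL_Submatrix" "Jordan_Normal_Form.Determinant" Complex_Main
begin

definition T :: "nat \<Rightarrow> nat" where "T m = m * (m + 1) div 2"

text \<open>Basis symbols of g_n: h, x_-, x_+, y_{i,+} (Y i True), y_{i,-} (Y i False), z_{i,j}.\<close>
datatype gbasis = H | Xm | Xp | Y nat bool | Z nat nat

definition gbasis_list :: "nat \<Rightarrow> gbasis list" where
  "gbasis_list n = [H, Xm, Xp]
     @ map (\<lambda>i. Y i True) [1..<n-1] @ map (\<lambda>i. Y i False) [1..<n-1]
     @ concat (map (\<lambda>i. map (\<lambda>j. Z i j) [i..<n-1]) [1..<n-1])"

definition zlist :: "nat \<Rightarrow> gbasis list" where
  "zlist n = concat (map (\<lambda>i. map (\<lambda>j. Z i j) [i..<n-1]) [1..<n-1])"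

definition unitv :: "gbasis \<Rightarrow> int \<Rightarrow> gbasis \<Rightarrow> int" where
  "unitv b c = (\<lambda>k. if k = b then c else 0)"

text \<open>The listed nonzero brackets, in one orientation each.\<close>
fun br0 :: "gbasis \<Rightarrow> gbasis \<Rightarrow> gbasis \<Rightarrow> int" where
  "br0 Xp Xm = unitv H 1"
| "br0 H Xp = unitv Xp 2"
| "br0 H Xm = unitv Xm (-2)"
| "br0 H (Y i True) = unitv (Y i True) 1"
| "br0 H (Y i False) = unitv (Y i False) (-1)"
| "br0 Xm (Y i True) = unitv (Y i False) 1"
| "br0 Xp (Y i False) = unitv (Y i True) 1"
| "br0 (Y i True) (Y j False) = unitv (Z (min i j) (max i j)) 1"
| "br0 _ _ = (\<lambda>_. 0)"

definition bracket :: "gbasis \<Rightarrow> gbasis \<Rightarrow> gbasis \<Rightarrow> int" where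
  "bracket a b = (\<lambda>k. br0 a b k - br0 b a k)"

text \<open>The matrix A = (\<Sum>_k c_ij^k x_k)_{i,j}, evaluated at a point x of K^d
  (the commuting variables x_k are given the values x k).\<close>
definition Amat :: "nat \<Rightarrow> (gbasis \<Rightarrow> 'a::comm_ring_1) \<Rightarrow> 'a mat" where
  "Amat n x = (let L = gbasis_list n in
     mat (length L) (length L)
       (\<lambda>(i, j). \<Sum>k\<leftarrow>L. of_int (bracket (L ! i) (L ! j) k) * x k))"

text \<open>Rank of A as a matrix over the polynomial ring K[x_1..x_d] (equivalently its
  fraction field): the largest r such that some r x r minor is a nonzero polynomial.
  Over an infinite field K a polynomial is nonzero iff it does not vanish at some point.\<close>
definition generic_rank :: "'a::field itself \<Rightarrow> nat \<Rightarrow> nat" where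
  "generic_rank _ n = Max {r. \<exists>I J. I \<subseteq> {..<length (gbasis_list n)} \<and>
        J \<subseteq> {..<length (gbasis_list n)} \<and> card I = r \<and> card J = r \<and>
        (\<exists>x :: gbasis \<Rightarrow> 'a. det (submatrix (Amat n x) I J) \<noteq> 0)}"

definition num_casimirs :: "'a::field itself \<Rightarrow> nat \<Rightarrow> nat" where
  "num_casimirs K n = length (gbasis_list n) - generic_rank K n"

end

theory Submission
  imports Defs
begin


lemma gl_split: "gbasis_list n = [H, Xm, Xp] @ map (\<lambda>i. Y i True) [1..<n-1]
   @ map (\<lambda>i. Y i False) [1..<n-1] @ zlist n"
  by (simp add: gbasis_list_def zlist_def)

lemma set_zlist: "set (zlist n) = {Z i j | i j. 1 \<le> i \<and> i \<le> j \<and> j < n - 1}"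
  apply (auto simp: zlist_def)
  subgoal for i j by (rule bexI[of _ i]) auto
  done

lemma distinct_zlist: "distinct (zlist n)"
  unfolding zlist_def
  apply (rule distinct_concat)
    apply (auto simp: distinct_map inj_on_def)
  subgoal for x y
    apply (drule arg_cong[where f=hd])
    by (simp add: upt_conv_Cons)
  done

lemma sum_tri: "(\<Sum>i\<in>{1..<m}. (m::nat) - i) = T (m - 1)"
proof (induction m)
  case 0 then show ?case by (simp add: T_def)
next
  case (Suc m)
  show ?case
  proof (cases "m = 0")
    case True then show ?thesis by (simp add: T_def)
  next
    case False
  have "(\<Sum>i\<in>{1..<Suc m}. Suc m - i) = (\<Sum>i\<in>{1..<m}. Suc m - i) + 1"
    using False by (simp add: sum.atLeastLessThan_Suc)
  also have "(\<Sum>i\<in>{1..<m}. Suc m - i) = (\<Sum>i\<in>{1..<m}. (m - i) + 1)"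
    by (rule sum.cong) auto
  also have "\<dots> = (\<Sum>i\<in>{1..<m}. m - i) + (m - 1)"
    unfolding sum.distrib by simp
  also have "\<dots> = T (m - 1) + (m - 1)" using Suc False by simp
  finally have "(\<Sum>i\<in>{1..<Suc m}. Suc m - i) = T (m - 1) + (m - 1) + 1" .
  also have "\<dots> = T m" unfolding T_def using False
    by (cases m) (auto simp: algebra_simps)
  finally show ?thesis by simp
  qed
qed

lemma length_zlist: "length (zlist n) = T (n - 2)"
proof -
  have "length (zlist n) = (\<Sum>i\<leftarrow>[1..<n-1]. n - 1 - i)"
    by (simp add: zlist_def length_concat comp_def)
  also have "\<dots> = (\<Sum>i\<in>{1..<n-1}. n - 1 - i)"
    by (simp add: sum_list_distinct_conv_sum_set)
  also have "\<dots> = T (n - 2)" using sum_tri[of "n-1"] by (simp add: diff_diff_add numeral_2_eq_2)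
  finally show ?thesis .
qed

lemma length_gl: assumes "n \<ge> 2" shows "length (gbasis_list n) = T n"
proof -
  obtain m where m: "n = m + 2" using assms le_Suc_ex by (metis add.commute)
  have "length (gbasis_list n) = 3 + 2 * m + T m"
    by (simp add: gl_split length_zlist m)
  also have "\<dots> = T n" unfolding T_def m
    by (simp add: algebra_simps)
  finally show ?thesis .
qed

lemma distinct_gl: "distinct (gbasis_list n)"
  by (auto simp: gl_split distinct_zlist distinct_map inj_on_def set_zlist)



lemma nth_gl_low:
  assumes "n = m + 2" "p < 2 * m + 2"
  shows "gbasis_list n ! Suc p = (if p = 0 then Xm else if p = 1 then Xp
      else if p < m + 2 then Y (p - 1) True else Y (p - 1 - m) False)"
proof -
  let ?P = "map (\<lambda>i. Y i True) [1..<n-1]" and ?M = "map (\<lambda>i. Y i False) [1..<n-1]"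
  have L: "gbasis_list n ! Suc p = ([Xm, Xp] @ ?P @ ?M @ zlist n) ! p"
    by (simp add: gl_split)
  show ?thesis
  proof (cases "p < 2")
    case True then show ?thesis unfolding L by (cases p) auto
  next
    case False
    then obtain q where q: "p = Suc (Suc q)" by (metis add_2_eq_Suc le_add_diff_inverse not_less)
    have L2: "gbasis_list n ! Suc p = (?P @ ?M @ zlist n) ! q"
      using L q by simp
    have lP: "length ?P = m" using assms by simp
    show ?thesis
    proof (cases "q < m")
      case True
      have "(?P @ ?M @ zlist n) ! q = ?P ! q"
        using True lP by (simp only: nth_append) simp
      also have "\<dots> = Y (q + 1) True" using True assms(1) by (simp add: nth_upt del: upt_Suc)
      finally show ?thesis using L2 True q by simp
    next
      case F2: False
      have "(?P @ ?M @ zlist n) ! q = ?M ! (q - m)"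
      proof -
        have qm: "q - m < m" using assms q F2 by simp
        have lM: "length ?M = m" using assms by simp
        show ?thesis using F2 lP lM qm by (simp add: nth_append del: upt_Suc)
      qed
      also have "\<dots> = Y (q - m + 1) False"
      proof -
        have qm: "q - m < m" using assms q F2 by simp
        then show ?thesis using assms by (simp add: nth_upt del: upt_Suc)
      qed
      finally show ?thesis using L2 F2 q by simp
    qed
  qed
qed

lemma nth_gl_high:
  assumes "n = m + 2" "2 * m + 3 \<le> i" "i < length (gbasis_list n)"
  shows "gbasis_list n ! i \<in> set (zlist n)"
proof -
  let ?pre = "[H, Xm, Xp] @ map (\<lambda>i. Y i True) [1..<n-1] @ map (\<lambda>i. Y i False) [1..<n-1]"
  have e: "gbasis_list n = ?pre @ zlist n" by (simp add: gl_split)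
  have lp: "length ?pre = 2 * m + 3" using assms(1) by (simp del: upt_Suc)
  have "gbasis_list n ! i = zlist n ! (i - (2 * m + 3))"
    unfolding e using assms(2) lp by (simp only: nth_append) simp
  moreover have "i - (2 * m + 3) < length (zlist n)"
  proof -
    have "length (gbasis_list n) = 2 * m + 3 + length (zlist n)" unfolding e using lp by simp
    then show ?thesis using assms(2,3) by linarith
  qed
  ultimately show ?thesis by simp
qed

lemma Amat_entry:
  assumes "i < length (gbasis_list n)" "j < length (gbasis_list n)"
  shows "Amat n x $$ (i, j) = (\<Sum>k\<in>set (gbasis_list n).
     of_int (bracket (gbasis_list n ! i) (gbasis_list n ! j) k) * x k)"
  using assms by (simp add: Amat_def Let_def sum_list_distinct_conv_sum_set distinct_gl)

lemma dim_Amat: "Amat n x \<in> carrier_mat (length (gbasis_list n)) (length (gbasis_list n))"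
  by (simp add: Amat_def Let_def)

lemma bracket_anti: "bracket b a k = - bracket a b k"
  by (simp add: bracket_def)

lemma Amat_anti:
  assumes "i < length (gbasis_list n)" "j < length (gbasis_list n)"
  shows "Amat n x $$ (j, i) = - Amat n x $$ (i, j)"
proof -
  have "Amat n x $$ (j, i) = (\<Sum>k\<in>set (gbasis_list n).
     - (of_int (bracket (gbasis_list n ! i) (gbasis_list n ! j) k) * x k))"
    using assms unfolding Amat_entry[OF assms(2,1)] by (intro sum.cong) (auto simp: bracket_def algebra_simps)
  then show ?thesis using assms by (simp add: Amat_entry sum_negf)
qed

lemma bracket_Z: "bracket (Z i j) b = (\<lambda>_. 0)"
  by (rule ext, cases b) (auto simp: bracket_def)

lemma Amat_Zrow:
  assumes "i < length (gbasis_list n)" "j < length (gbasis_list n)"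
    "gbasis_list n ! i \<in> set (zlist n)"
  shows "Amat n x $$ (i, j) = 0"
  using assms by (auto simp: Amat_entry set_zlist bracket_Z)

lemma br0_H: "br0 a b H = (if a = Xp \<and> b = Xm then 1 else 0)"
  by (induction a b rule: br0.induct) (auto simp: unitv_def)

lemma br0_Zii: "br0 a b (Z i i) = (if a = Y i True \<and> b = Y i False then 1 else 0)"
  by (induction a b rule: br0.induct) (auto simp: unitv_def)

lemma bracket_H: "bracket a b H = (if a = Xp \<and> b = Xm then 1 else if a = Xm \<and> b = Xp then -1 else 0)"
  by (auto simp: bracket_def br0_H)

lemma bracket_Zii: "bracket a b (Z i i) = (if a = Y i True \<and> b = Y i False then 1
   else if a = Y i False \<and> b = Y i True then -1 else 0)"
  by (auto simp: bracket_def br0_Zii)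


lemma det_zero_row:
  assumes B: "B \<in> carrier_mat N N" and k: "k < N" and z: "\<And>j. j < N \<Longrightarrow> B $$ (k, j) = 0"
  shows "det B = 0"
proof -
  have "\<And>p. p permutes {0..<N} \<Longrightarrow> (\<Prod>i = 0..<N. B $$ (i, p i)) = 0"
  proof -
    fix p assume p: "p permutes {0..<N}"
    then have "p k < N" using k permutes_in_image by fastforce
    then have "B $$ (k, p k) = 0" using z by simp
    then show "(\<Prod>i = 0..<N. B $$ (i, p i)) = 0" using k by (intro prod_zero) auto
  qed
  then show ?thesis unfolding det_def'[OF B] by simp
qed

lemma det_monomial:
  assumes B: "B \<in> carrier_mat N N" and s: "\<sigma> permutes {0..<N}"
    and z: "\<And>i j. i < N \<Longrightarrow> j < N \<Longrightarrow> j \<noteq> \<sigma> i \<Longrightarrow> B $$ (i, j) = 0"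
  shows "det B = signof \<sigma> * (\<Prod>i = 0..<N. B $$ (i, \<sigma> i))"
proof -
  let ?f = "\<lambda>p. signof p * (\<Prod>i = 0..<N. B $$ (i, p i))"
  have fin: "finite {p. p permutes {0..<N}}" by (simp add: finite_permutations)
  have "det B = (\<Sum>p\<in>{p. p permutes {0..<N}}. ?f p)" by (rule det_def'[OF B])
  also have "\<dots> = ?f \<sigma> + (\<Sum>p\<in>{p. p permutes {0..<N}} - {\<sigma>}. ?f p)"
    using s by (intro sum.remove[OF fin]) auto
  also have "(\<Sum>p\<in>{p. p permutes {0..<N}} - {\<sigma>}. ?f p) = 0"
  proof (rule sum.neutral, rule ballI)
    fix p assume "p \<in> {p. p permutes {0..<N}} - {\<sigma>}"
    then have p: "p permutes {0..<N}" and ne: "p \<noteq> \<sigma>" by auto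
    then obtain i where i: "p i \<noteq> \<sigma> i" by (meson ext)
    have iN: "i < N"
    proof (rule ccontr)
      assume "\<not> i < N"
      then have "p i = i" "\<sigma> i = i" using p s by (auto simp: permutes_def)
      then show False using i by simp
    qed
    have "p i < N" using iN p permutes_in_image by fastforce
    then have "B $$ (i, p i) = 0" using z iN i by simp
    then have "(\<Prod>i = 0..<N. B $$ (i, p i)) = 0" using iN by (intro prod_zero) auto
    then show "?f p = 0" by simp
  qed
  finally show ?thesis by simp
qed


lemma det_antisym_odd:
  fixes B :: "'a::field_char_0 mat"
  assumes B: "B \<in> carrier_mat N N" and o: "odd N"
    and a: "\<And>i j. i < N \<Longrightarrow> j < N \<Longrightarrow> B $$ (j, i) = - B $$ (i, j)"
  shows "det B = 0"
proof -
  have "transpose_mat B = (-1) \<cdot>\<^sub>m B"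
  proof (rule eq_matI)
    fix i j assume "i < dim_row ((-1) \<cdot>\<^sub>m B)" "j < dim_col ((-1) \<cdot>\<^sub>m B)"
    then have ij: "i < N" "j < N" using B by auto
    show "transpose_mat B $$ (i, j) = ((-1) \<cdot>\<^sub>m B) $$ (i, j)"
      using ij B a[OF ij(2) ij(1)] by simp
  qed (use B in auto)
  then have "det B = (-1) ^ N * det B"
    using det_transpose[OF B] B by simp
  also have "\<dots> = - det B" using o by simp
  finally show ?thesis by simp
qed


definition x0 :: "gbasis \<Rightarrow> 'a::field" where
  "x0 k = (case k of H \<Rightarrow> 1 | Z i j \<Rightarrow> (if i = j then 1 else 0) | _ \<Rightarrow> 0)"

fun partner :: "gbasis \<Rightarrow> gbasis" where
  "partner Xm = Xp" | "partner Xp = Xm" | "partner (Y i s) = Y i (\<not> s)" | "partner a = a"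

lemma V_zero:
  assumes "b \<noteq> partner a"
  shows "(\<Sum>k\<in>K. of_int (bracket a b k) * (x0 k :: 'a::field)) = 0"
proof (rule sum.neutral, rule ballI)
  fix k
  have H: "bracket a b H = 0" using assms by (cases a) (auto simp: bracket_H)
  have Zi: "bracket a b (Z i i) = 0" for i using assms by (cases a) (auto simp: bracket_Zii)
  show "of_int (bracket a b k) * (x0 k :: 'a) = 0"
    using H Zi by (cases k) (auto simp: x0_def)
qed

lemma sum_single:
  assumes "finite K" "k0 \<in> K" "\<And>k. k \<in> K \<Longrightarrow> k \<noteq> k0 \<Longrightarrow> f k = 0"
  shows "sum f K = f k0"
proof -
  have "sum f {k0} = sum f K" using assms by (intro sum.mono_neutral_left) auto
  then show ?thesis by simp
qed

lemma H_in: "H \<in> set (gbasis_list n)" by (simp add: gl_split)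

lemma Zii_in: "n = m + 2 \<Longrightarrow> 1 \<le> i \<Longrightarrow> i \<le> m \<Longrightarrow> Z i i \<in> set (gbasis_list n)"
  by (auto simp: gl_split set_zlist)

lemma V_partner:
  assumes n: "n = m + 2" and a: "a = Xm \<or> a = Xp \<or> (\<exists>i s. a = Y i s \<and> 1 \<le> i \<and> i \<le> m)"
  shows "(\<Sum>k\<in>set (gbasis_list n). of_int (bracket a (partner a) k) * (x0 k :: 'a::field)) \<noteq> 0"
proof -
  consider "a = Xm" | "a = Xp" | i s where "a = Y i s" "1 \<le> i" "i \<le> m" using a by blast
  then show ?thesis
  proof cases
    case 1
    have "(\<Sum>k\<in>set (gbasis_list n). of_int (bracket a (partner a) k) * (x0 k :: 'a)) 
      = of_int (bracket a (partner a) H) * x0 H"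
      by (rule sum_single) (auto simp: H_in 1 bracket_def unitv_def)
    then show ?thesis by (simp add: 1 bracket_H x0_def)
  next
    case 2
    have "(\<Sum>k\<in>set (gbasis_list n). of_int (bracket a (partner a) k) * (x0 k :: 'a)) 
      = of_int (bracket a (partner a) H) * x0 H"
      by (rule sum_single) (auto simp: H_in 2 bracket_def unitv_def)
    then show ?thesis by (simp add: 2 bracket_H x0_def)
  next
    case 3
    have "(\<Sum>k\<in>set (gbasis_list n). of_int (bracket a (partner a) k) * (x0 k :: 'a)) 
      = of_int (bracket a (partner a) (Z i i)) * x0 (Z i i)"
      apply (rule sum_single)
        apply simp
      using 3 Zii_in[OF n] apply simp
      using 3 by (cases s) (auto simp: bracket_def unitv_def)
    then show ?thesis by (simp add: 3 bracket_Zii x0_def)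
  qed
qed


definition sig :: "nat \<Rightarrow> nat \<Rightarrow> nat" where
  "sig m p = (if p = 0 then 1 else if p = 1 then 0 else if p < m + 2 then p + m
     else if p < 2 * m + 2 then p - m else p)"

lemma sig_inv: "sig m (sig m p) = p"
  by (auto simp: sig_def)

lemma sig_range: "p < 2 * m + 2 \<Longrightarrow> sig m p < 2 * m + 2"
  by (auto simp: sig_def)

lemma sig_permutes: "sig m permutes {0..<2 * m + 2}"
proof -
  have "\<And>p. p \<notin> {0..<2 * m + 2} \<Longrightarrow> sig m p = p" by (auto simp: sig_def)
  moreover have "\<exists>!x. sig m x = y" for y by (metis sig_inv)
  ultimately show ?thesis unfolding permutes_def by blast
qed

lemma length_gl_ge: "n = m + 2 \<Longrightarrow> 2 * m + 3 \<le> length (gbasis_list n)"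
  by (simp add: gl_split)

lemma e_sig:
  assumes n: "n = m + 2" and p: "p < 2 * m + 2"
  shows "gbasis_list n ! Suc (sig m p) = partner (gbasis_list n ! Suc p)"
  using nth_gl_low[OF n p] nth_gl_low[OF n sig_range[OF p]] p
  by (auto simp: sig_def)

lemma e_form:
  assumes n: "n = m + 2" and p: "p < 2 * m + 2"
  shows "gbasis_list n ! Suc p = Xm \<or> gbasis_list n ! Suc p = Xp \<or>
    (\<exists>i s. gbasis_list n ! Suc p = Y i s \<and> 1 \<le> i \<and> i \<le> m)"
  using nth_gl_low[OF n p] p by auto

lemma e_inj:
  assumes n: "n = m + 2" and p: "p < 2 * m + 2" and q: "q < 2 * m + 2"
    and eq: "gbasis_list n ! Suc p = gbasis_list n ! Suc q"
  shows "p = q"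
proof -
  have "Suc p < length (gbasis_list n)" "Suc q < length (gbasis_list n)"
    using length_gl_ge[OF n] p q by auto
  then show ?thesis using eq distinct_gl nth_eq_iff_index_eq by fastforce
qed

lemma pick_shift:
  assumes "p < 2 * m + 2"
  shows "pick {1..<2 * m + 3} p = Suc p"
proof -
  have "{a \<in> {1..<2 * m + 3}. a < Suc p} = {1..<Suc p}" using assms by auto
  then have "card {a \<in> {1..<2 * m + 3}. a < Suc p} = p" by simp
  moreover have "Suc p \<in> {1..<2 * m + 3}" using assms by simp
  ultimately show ?thesis using pick_card_in_set by metis
qed

lemma lower_witness:
  assumes n: "n = m + 2"
  shows "det (submatrix (Amat n (x0 :: gbasis \<Rightarrow> 'a::field_char_0)) {1..<2 * m + 3} {1..<2 * m + 3}) \<noteq> 0"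
proof -
  let ?L = "gbasis_list n" and ?I = "{1..<2 * m + 3}"
  let ?A = "Amat n (x0 :: gbasis \<Rightarrow> 'a)"
  let ?S = "submatrix ?A ?I ?I"
  have dA: "dim_row ?A = length ?L" "dim_col ?A = length ?L" using carrier_matD[OF dim_Amat] by blast+
  have lge: "2 * m + 3 \<le> length ?L" by (rule length_gl_ge[OF n])
  have cI: "{i. i < length ?L \<and> i \<in> ?I} = ?I" using lge by auto
  have cI2: "card ?I = 2 * m + 2" by simp
  have S: "?S \<in> carrier_mat (2 * m + 2) (2 * m + 2)"
  proof (rule carrier_matI)
    show "dim_row ?S = 2 * m + 2" by (simp only: dim_submatrix dA cI cI2)
    show "dim_col ?S = 2 * m + 2" by (simp only: dim_submatrix dA cI cI2)
  qed
  have Sij: "?S $$ (p, q) = (\<Sum>k\<in>set ?L. of_int (bracket (?L ! Suc p) (?L ! Suc q) k) * x0 k)"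
    if "p < 2 * m + 2" "q < 2 * m + 2" for p q
  proof -
    have "?S $$ (p, q) = ?A $$ (pick ?I p, pick ?I q)"
      using that by (intro submatrix_index) (simp_all only: dA cI cI2)
    also have "\<dots> = ?A $$ (Suc p, Suc q)" using that pick_shift by simp
    also have "\<dots> = (\<Sum>k\<in>set ?L. of_int (bracket (?L ! Suc p) (?L ! Suc q) k) * x0 k)" using that lge by (intro Amat_entry) auto
    finally show ?thesis .
  qed
  have "det ?S = signof (sig m) * (\<Prod>i = 0..<2 * m + 2. ?S $$ (i, sig m i))"
  proof (rule det_monomial[OF S sig_permutes])
    fix i j assume ij: "i < 2 * m + 2" "j < 2 * m + 2" "j \<noteq> sig m i"
    have "?L ! Suc j \<noteq> partner (?L ! Suc i)"
    proof
      assume "?L ! Suc j = partner (?L ! Suc i)"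
      then have "?L ! Suc j = ?L ! Suc (sig m i)" using e_sig[OF n ij(1)] by simp
      then have "j = sig m i" using e_inj[OF n ij(2) sig_range[OF ij(1)]] by simp
      then show False using ij by simp
    qed
    then show "?S $$ (i, j) = 0" using Sij[OF ij(1,2)] V_zero by simp
  qed
  moreover have "signof (sig m) \<noteq> (0::'a)" by (simp add: sign_def)
  moreover have "(\<Prod>i = 0..<2 * m + 2. ?S $$ (i, sig m i)) \<noteq> 0"
  proof -
    have "?S $$ (i, sig m i) \<noteq> 0" if i: "i < 2 * m + 2" for i
    proof -
      have "?S $$ (i, sig m i) = (\<Sum>k\<in>set ?L. of_int (bracket (?L ! Suc i) (partner (?L ! Suc i)) k) * x0 k)"
        using Sij[OF i sig_range[OF i]] e_sig[OF n i] by simp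
      also have "\<dots> \<noteq> 0" by (rule V_partner[OF n e_form[OF n i]])
      finally show ?thesis .
    qed
    then show ?thesis by (simp add: prod_zero_iff)
  qed
  ultimately show ?thesis by simp
qed

lemma upper_bound:
  fixes x :: "gbasis \<Rightarrow> 'a::field_char_0"
  assumes n: "n = m + 2" and I: "I \<subseteq> {..<length (gbasis_list n)}"
    and J: "J \<subseteq> {..<length (gbasis_list n)}" and cIJ: "card J = card I"
    and dt: "det (submatrix (Amat n x) I J) \<noteq> 0"
  shows "card I \<le> 2 * m + 2"
proof (rule ccontr)
  assume big: "\<not> card I \<le> 2 * m + 2"
  let ?L = "gbasis_list n" and ?A = "Amat n x"
  let ?S = "submatrix ?A I J" and ?r = "card I"
  have dA: "dim_row ?A = length ?L" "dim_col ?A = length ?L" using carrier_matD[OF dim_Amat] by blast+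
  have cI: "{i. i < length ?L \<and> i \<in> I} = I" using I by auto
  have cJ: "{i. i < length ?L \<and> i \<in> J} = J" using J by auto
  have fI: "finite I" using I finite_subset by blast
  have fJ: "finite J" using J finite_subset by blast
  have S: "?S \<in> carrier_mat ?r ?r"
  proof (rule carrier_matI)
    show "dim_row ?S = ?r" by (simp only: dim_submatrix dA cI)
    show "dim_col ?S = ?r" by (simp only: dim_submatrix dA cJ cIJ)
  qed
  have Sidx: "?S $$ (p, q) = ?A $$ (pick I p, pick J q)" if "p < ?r" "q < ?r" for p q
    using that by (intro submatrix_index) (simp_all only: dA cI cJ cIJ)
  have pI: "pick I p \<in> I" if "p < ?r" for p using that pick_in_set by blast
  have pJ: "pick J p \<in> J" if "p < ?r" for p using that pick_in_set cIJ by metis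
  have lge: "2 * m + 3 \<le> length ?L" by (rule length_gl_ge[OF n])
  consider (rowI) i where "i \<in> I" "2 * m + 3 \<le> i" | (colJ) j where "j \<in> J" "2 * m + 3 \<le> j"
    | (small) "I \<subseteq> {..<2 * m + 3}" "J \<subseteq> {..<2 * m + 3}"
    by (meson lessThan_iff not_le subsetI)
  then show False
  proof cases
    case rowI
    let ?k = "card {a \<in> I. a < i}"
    have "{a \<in> I. a < i} \<subset> I" using rowI by auto
    then have k: "?k < ?r" using fI psubset_card_mono by blast
    have pk: "pick I ?k = i" using pick_card_in_set[OF rowI(1)] .
    have il: "i < length ?L" using rowI I by auto
    have "det ?S = 0"
    proof (rule det_zero_row[OF S k])
      fix q assume q: "q < ?r"
      have "pick J q < length ?L" using pJ[OF q] J by auto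
      then show "?S $$ (?k, q) = 0"
        unfolding Sidx[OF k q] pk
        by (rule Amat_Zrow[OF il]) (rule nth_gl_high[OF n rowI(2) il])
    qed
    then show False using dt by simp
  next
    case colJ
    let ?k = "card {a \<in> J. a < j}"
    have "{a \<in> J. a < j} \<subset> J" using colJ by auto
    then have k: "?k < ?r" using fJ psubset_card_mono cIJ by metis
    have pk: "pick J ?k = j" using pick_card_in_set[OF colJ(1)] .
    have jl: "j < length ?L" using colJ J by auto
    have T: "transpose_mat ?S \<in> carrier_mat ?r ?r" using S by simp
    have "det (transpose_mat ?S) = 0"
    proof (rule det_zero_row[OF T k])
      fix q assume q: "q < ?r"
      have ql: "pick I q < length ?L" using pI[OF q] I by auto
      have "transpose_mat ?S $$ (?k, q) = ?S $$ (q, ?k)" using S q k by simp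
      also have "\<dots> = ?A $$ (pick I q, j)" unfolding Sidx[OF q k] pk ..
      also have "\<dots> = - ?A $$ (j, pick I q)" by (rule Amat_anti[OF jl ql])
      also have "?A $$ (j, pick I q) = 0"
        by (rule Amat_Zrow[OF jl ql]) (rule nth_gl_high[OF n colJ(2) jl])
      finally show "transpose_mat ?S $$ (?k, q) = 0" by simp
    qed
    then show False using dt det_transpose[OF S] by simp
  next
    case small
    have c: "card {..<2 * m + 3} = 2 * m + 3" by simp
    have "card I \<le> 2 * m + 3" using card_mono[OF _ small(1)] c by simp
    then have ci: "card I = card {..<2 * m + 3}" using big c by simp
    have II: "I = {..<2 * m + 3}" by (rule card_subset_eq[OF _ small(1) ci]) simp
    have cj: "card J = card {..<2 * m + 3}" using ci cIJ by simp
    have JJ: "J = {..<2 * m + 3}" by (rule card_subset_eq[OF _ small(2) cj]) simp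
    have r: "?r = 2 * m + 3" using II by simp
    have "det ?S = 0"
    proof (rule det_antisym_odd[OF S])
      show "odd ?r" using r by simp
      fix p q assume pq: "p < ?r" "q < ?r"
      have l: "pick I p < length ?L" "pick I q < length ?L" using pI pq I by auto
      have IJ: "pick J a = pick I a" for a by (simp only: JJ II)
      have "?S $$ (q, p) = ?A $$ (pick I q, pick I p)" using Sidx[OF pq(2) pq(1)] IJ by simp
      also have "\<dots> = - ?A $$ (pick I p, pick I q)" by (rule Amat_anti[OF l])
      also have "?A $$ (pick I p, pick I q) = ?S $$ (p, q)" using Sidx[OF pq] IJ by simp
      finally show "?S $$ (q, p) = - ?S $$ (p, q)" .
    qed
    then show False using dt by simp
  qed
qed

lemma T_step: "T (m + 2) = T m + 2 * m + 3"
proof -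
  have "(m + 2) * (m + 2 + 1) = m * (m + 1) + (2 * m + 3) * 2" by (simp add: algebra_simps)
  then show ?thesis unfolding T_def by simp
qed

lemma rank_eq:
  assumes n: "n = m + 2"
  shows "generic_rank (TYPE('a::field_char_0)) n = 2 * m + 2"
proof -
  let ?d = "length (gbasis_list n)"
  let ?R = "{r. \<exists>I J. I \<subseteq> {..<?d} \<and> J \<subseteq> {..<?d} \<and> card I = r \<and> card J = r \<and>
        (\<exists>x :: gbasis \<Rightarrow> 'a. det (submatrix (Amat n x) I J) \<noteq> 0)}"
  have fin: "finite ?R"
  proof (rule finite_subset)
    show "?R \<subseteq> {..?d}"
    proof
      fix r assume "r \<in> ?R"
      then obtain I where "I \<subseteq> {..<?d}" "card I = r" by blast
      then have "r \<le> card {..<?d}" using card_mono by blast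
      then show "r \<in> {..?d}" by simp
    qed
  qed simp
  have ub: "r \<le> 2 * m + 2" if "r \<in> ?R" for r
  proof -
    from that obtain I J x where IJ: "I \<subseteq> {..<?d}" "J \<subseteq> {..<?d}" "card I = r" "card J = r"
      and dt: "det (submatrix (Amat n (x :: gbasis \<Rightarrow> 'a)) I J) \<noteq> 0" by blast
    have "card I \<le> 2 * m + 2"
      by (rule upper_bound[OF n IJ(1,2) _ dt]) (simp add: IJ)
    then show ?thesis using IJ by simp
  qed
  have mem: "2 * m + 2 \<in> ?R"
  proof -
    have "{1..<2 * m + 3} \<subseteq> {..<?d}" using length_gl_ge[OF n] by auto
    moreover have "card {1..<2 * m + 3} = 2 * m + 2" by simp
    moreover have "det (submatrix (Amat n (x0 :: gbasis \<Rightarrow> 'a)) {1..<2 * m + 3} {1..<2 * m + 3}) \<noteq> 0"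
      by (rule lower_witness[OF n])
    ultimately show ?thesis by blast
  qed
  show ?thesis unfolding generic_rank_def
    by (rule Max_eqI[OF fin ub mem])
qed

lemma centre:
  "{b \<in> set (gbasis_list n). \<forall>c \<in> set (gbasis_list n). bracket b c = (\<lambda>_. 0)} = set (zlist n)"
proof
  show "set (zlist n) \<subseteq> {b \<in> set (gbasis_list n). \<forall>c \<in> set (gbasis_list n). bracket b c = (\<lambda>_. 0)}"
    by (auto simp: gl_split set_zlist bracket_Z)
next
  show "{b \<in> set (gbasis_list n). \<forall>c \<in> set (gbasis_list n). bracket b c = (\<lambda>_. 0)} \<subseteq> set (zlist n)"
  proof
    fix b assume b: "b \<in> {b \<in> set (gbasis_list n). \<forall>c \<in> set (gbasis_list n). bracket b c = (\<lambda>_. 0)}"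
    then have bL: "b \<in> set (gbasis_list n)" and cen: "\<And>c. c \<in> set (gbasis_list n) \<Longrightarrow> bracket b c = (\<lambda>_. 0)"
      by auto
    have HL: "H \<in> set (gbasis_list n)" "Xm \<in> set (gbasis_list n)" "Xp \<in> set (gbasis_list n)"
      by (auto simp: gl_split)
    show "b \<in> set (zlist n)"
    proof (cases b)
      case H
      have "bracket b Xp Xp = 0" using cen[OF HL(3)] by simp
      then show ?thesis using H by (simp add: bracket_def unitv_def)
    next
      case Xm
      have "bracket b Xp H = 0" using cen[OF HL(3)] by simp
      then show ?thesis using Xm by (simp add: bracket_H)
    next
      case Xp
      have "bracket b Xm H = 0" using cen[OF HL(2)] by simp
      then show ?thesis using Xp by (simp add: bracket_H)
    next
      case (Y i s)
      have "bracket b H b = 0" using cen[OF HL(1)] by simp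
      then show ?thesis using Y by (cases s) (simp_all add: bracket_def unitv_def)
    next
      case (Z i j)
      then show ?thesis using bL by (auto simp: gl_split)
    qed
  qed
qed

theorem proposition3p4:
  fixes n :: nat
  assumes "n \<ge> 2"
  shows "length (gbasis_list n) = T n
    \<and> generic_rank TYPE(real) n = 2 * (n - 1)
    \<and> generic_rank TYPE(complex) n = 2 * (n - 1)
    \<and> num_casimirs TYPE(real) n = T (n - 2) + 1
    \<and> num_casimirs TYPE(complex) n = T (n - 2) + 1
    \<and> {b \<in> set (gbasis_list n). \<forall>c \<in> set (gbasis_list n). bracket b c = (\<lambda>_. 0)}
        = set (zlist n)
    \<and> length (zlist n) = T (n - 2) \<and> distinct (zlist n)"
proof -
  obtain m where n: "n = m + 2" using assms by (metis add.commute le_Suc_ex)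
  have len: "length (gbasis_list n) = T n" by (rule length_gl[OF assms])
  have rr: "generic_rank TYPE(real) n = 2 * (n - 1)" using rank_eq[OF n] n by simp
  have rc: "generic_rank TYPE(complex) n = 2 * (n - 1)" using rank_eq[OF n] n by simp
  have Tn: "T n = T (n - 2) + 2 * m + 3" using T_step[of m] n by simp
  have nr: "num_casimirs TYPE(real) n = T (n - 2) + 1"
    unfolding num_casimirs_def using len rr Tn n by simp
  have nc: "num_casimirs TYPE(complex) n = T (n - 2) + 1"
    unfolding num_casimirs_def using len rc Tn n by simp
  show ?thesis using len rr rc nr nc centre length_zlist distinct_zlist by blast
qed

end
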